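(* Let $n\ge 2$ and $1\le \ell\le n-1$. Let $\mathbf{x}=(x_1,\dots,x_n)$ satisfy $x_1\le\dots\le x_\ell<0\le x_{\ell+1}\le\dots\le x_n$, and let $M=-\mathbf{x}^T\mathbf{x}$, with pairwise distinct off-diagonal entries. Then $\beta_k(t)=0$ for all $k>0$ and all $t\in[0,1]$.
   Context: Betti curves of a symmetric matrix. Let $M$ be a real symmetric $n\times n$ matrix whose $\binom{n}{2}$ off-diagonal entries $M_{ij}$ ($i<j$) are pairwise distinct. The ordering matrix $\widehat{M}$ is defined by $\widehat{M}_{ij}=k$ if $M_{ij}$ is the $k$-th smallest off-diagonal entry. For $t\in[0,1]$, $G_t=G_t(M)$ is the graph on vertex set $\{1,\dots,n\}$ with edge set $\{\{i,j\} : \widehat{M}_{ij}\le t\binom{n}{2}\}$ (so edges are added in increasing order of the entries $M_{ij}$; $G_0$ has no edges and $G_1$ is complete). $X(G_t)$ is the clique complex of $G_t$ (every $k$-clique of $G_t$ is filled in by a $(k-1)$-dimensional simplex). The $i$-th Betti curve of $M$ is $\beta_i(t)=\operatorname{rank} H_i(X(G_t);\mathbf{k})$, with $H_i$ simplicial homology with coefficients in a fixed field $\mathbf{k}$. Here $\mathbf{x}$ is a row vector, so $\mathbf{x}^T\mathbf{x}$ is the $n\times n$ matrix with entries $x_ix_j$. *)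

theory Defs
  imports Complex_Main "HOL-Library.Function_Algebras"
begin

definition ordering_rank :: "(nat \<Rightarrow> nat \<Rightarrow> real) \<Rightarrow> nat \<Rightarrow> nat \<Rightarrow> nat \<Rightarrow> nat" where
  "ordering_rank M n i j = card {(a, b). 1 \<le> a \<and> a < b \<and> b \<le> n \<and> M a b \<le> M i j}"

definition graph_edge :: "(nat \<Rightarrow> nat \<Rightarrow> real) \<Rightarrow> nat \<Rightarrow> real \<Rightarrow> nat \<Rightarrow> nat \<Rightarrow> bool" where
  "graph_edge M n t i j \<longleftrightarrow> i \<in> {1..n} \<and> j \<in> {1..n} \<and> i \<noteq> j \<and>
     real (ordering_rank M n (min i j) (max i j)) \<le> t * real (n choose 2)"

text \<open>d-dimensional simplices of the clique complex X(G) of the graph with vertex set V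
  and edge relation E: (d+1)-cliques, represented as strictly increasing vertex lists
  (this fixes the orientation).\<close>
definition clique_simplices :: "nat set \<Rightarrow> (nat \<Rightarrow> nat \<Rightarrow> bool) \<Rightarrow> nat \<Rightarrow> nat list set" where
  "clique_simplices V E d = {\<sigma>. sorted_wrt (<) \<sigma> \<and> length \<sigma> = Suc d \<and> set \<sigma> \<subseteq> V \<and>
      (\<forall>a\<in>set \<sigma>. \<forall>b\<in>set \<sigma>. a \<noteq> b \<longrightarrow> E a b)}"

definition chains :: "'k itself \<Rightarrow> nat set \<Rightarrow> (nat \<Rightarrow> nat \<Rightarrow> bool) \<Rightarrow> nat \<Rightarrow> (nat list \<Rightarrow> 'k::field) set" where
  "chains _ V E d = {f. \<forall>\<sigma>. \<sigma> \<notin> clique_simplices V E d \<longrightarrow> f \<sigma> = 0}"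

definition boundary :: "nat set \<Rightarrow> (nat \<Rightarrow> nat \<Rightarrow> bool) \<Rightarrow> nat \<Rightarrow> (nat list \<Rightarrow> 'k::field) \<Rightarrow> nat list \<Rightarrow> 'k" where
  "boundary V E d f \<tau> = (if \<tau> \<in> clique_simplices V E d then
      (\<Sum>\<sigma>\<in>clique_simplices V E (Suc d). \<Sum>j<length \<sigma>.
          if take j \<sigma> @ drop (Suc j) \<sigma> = \<tau> then (-1) ^ j * f \<sigma> else 0)
    else 0)"

definition chain_scale :: "'k::field \<Rightarrow> (nat list \<Rightarrow> 'k) \<Rightarrow> nat list \<Rightarrow> 'k" where
  "chain_scale c f = (\<lambda>\<sigma>. c * f \<sigma>)"

definition cycles :: "'k itself \<Rightarrow> nat set \<Rightarrow> (nat \<Rightarrow> nat \<Rightarrow> bool) \<Rightarrow> nat \<Rightarrow> (nat list \<Rightarrow> 'k::field) set" where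
  "cycles K V E d = {f \<in> chains K V E d. d = 0 \<or> boundary V E (d - 1) f = (\<lambda>_. 0)}"

definition bdries :: "'k itself \<Rightarrow> nat set \<Rightarrow> (nat \<Rightarrow> nat \<Rightarrow> bool) \<Rightarrow> nat \<Rightarrow> (nat list \<Rightarrow> 'k::field) set" where
  "bdries K V E d = boundary V E d ` chains K V E (Suc d)"

definition simplicial_betti :: "'k::field itself \<Rightarrow> nat set \<Rightarrow> (nat \<Rightarrow> nat \<Rightarrow> bool) \<Rightarrow> nat \<Rightarrow> nat" where
  "simplicial_betti K V E d =
     vector_space.dim (chain_scale :: 'k \<Rightarrow> _) (cycles K V E d)
     - vector_space.dim (chain_scale :: 'k \<Rightarrow> _) (bdries K V E d)"

definition betti_curve :: "'k::field itself \<Rightarrow> (nat \<Rightarrow> nat \<Rightarrow> real) \<Rightarrow> nat \<Rightarrow> nat \<Rightarrow> real \<Rightarrow> nat" where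
  "betti_curve K M n d t = simplicial_betti K {1..n} (graph_edge M n t) d"

end

theory Submission
  imports Defs
begin


declare sorted_list_of_set_insert_remove [simp del]

abbreviation L :: "nat set \<Rightarrow> nat list" where "L \<equiv> sorted_list_of_set"

definition clq :: "nat set \<Rightarrow> (nat \<Rightarrow> nat \<Rightarrow> bool) \<Rightarrow> nat set \<Rightarrow> bool" where
  "clq V E A \<longleftrightarrow> A \<subseteq> V \<and> (\<forall>a\<in>A. \<forall>b\<in>A. a \<noteq> b \<longrightarrow> E a b)"

definition pos :: "nat \<Rightarrow> nat set \<Rightarrow> nat" where
  "pos u A = card {a\<in>A. a < u}"

lemma S_iff: "\<sigma> \<in> clique_simplices V E d \<longleftrightarrow> sorted_wrt (<) \<sigma> \<and> length \<sigma> = Suc d \<and> clq V E (set \<sigma>)"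
  by (auto simp: clique_simplices_def clq_def)

lemma L_set: "sorted_wrt (<) \<sigma> \<Longrightarrow> L (set \<sigma>) = \<sigma>"
  using sorted_list_of_set_unique[of "set \<sigma>" \<sigma>]
  by (simp add: strict_sorted_iff distinct_card)

lemma L_props: "finite A \<Longrightarrow> sorted_wrt (<) (L A) \<and> set (L A) = A \<and> length (L A) = card A"
  by simp

lemma L_in_S: "finite A \<Longrightarrow> card A = Suc d \<Longrightarrow> clq V E A \<Longrightarrow> L A \<in> clique_simplices V E d"
  by (simp add: S_iff)

lemma S_finite_set: "\<sigma> \<in> clique_simplices V E d \<Longrightarrow> card (set \<sigma>) = Suc d"
  by (auto simp: S_iff strict_sorted_iff distinct_card)

lemma S_finite: "finite V \<Longrightarrow> finite (clique_simplices V E d)"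
proof -
  assume "finite V"
  have "clique_simplices V E d \<subseteq> {xs. set xs \<subseteq> V \<and> length xs = Suc d}"
    by (auto simp: clique_simplices_def)
  moreover have "finite {xs. set xs \<subseteq> V \<and> length xs = Suc d}"
    using finite_lists_length_eq[OF \<open>finite V\<close>] by simp
  ultimately show ?thesis by (rule finite_subset)
qed

lemma clq_mono: "clq V E A \<Longrightarrow> B \<subseteq> A \<Longrightarrow> clq V E B"
  by (auto simp: clq_def)

lemma pos_nth: fixes \<sigma> :: "nat list" assumes "sorted_wrt (<) \<sigma>" "j < length \<sigma>"
  shows "pos (\<sigma>!j) (set \<sigma>) = j"
proof -
  have "{a\<in>set \<sigma>. a < \<sigma>!j} = set (take j \<sigma>)"
  proof
    show "{a\<in>set \<sigma>. a < \<sigma>!j} \<subseteq> set (take j \<sigma>)"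
    proof
      fix a assume "a \<in> {a\<in>set \<sigma>. a < \<sigma>!j}"
      then obtain i where i: "i < length \<sigma>" "a = \<sigma>!i" "\<sigma>!i < \<sigma>!j" by (auto simp: in_set_conv_nth)
      have "i < j"
      proof (rule ccontr)
        assume "\<not> i < j"
        then have "j \<le> i" by simp
        then have "\<sigma>!j \<le> \<sigma>!i" using assms i sorted_wrt_nth_less[OF assms(1), of j i]
          by (cases "i = j") auto
        then show False using i by simp
      qed
      then show "a \<in> set (take j \<sigma>)" using i by (auto simp: in_set_conv_nth)
    qed
  next
    show "set (take j \<sigma>) \<subseteq> {a\<in>set \<sigma>. a < \<sigma>!j}"
    proof
      fix a assume "a \<in> set (take j \<sigma>)"
      then obtain i where "i < j" "a = \<sigma>!i" using assms(2) by (auto simp: in_set_conv_nth)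
      then show "a \<in> {a\<in>set \<sigma>. a < \<sigma>!j}" using sorted_wrt_nth_less[OF assms(1), of i j] assms(2)
        by auto
    qed
  qed
  moreover have "distinct (take j \<sigma>)" using assms(1) by (simp add: strict_sorted_iff)
  ultimately show ?thesis using assms(2) by (simp add: pos_def distinct_card)
qed

lemma del_props: fixes \<sigma> :: "nat list" assumes "sorted_wrt (<) \<sigma>" "j < length \<sigma>"
  shows "sorted_wrt (<) (take j \<sigma> @ drop (Suc j) \<sigma>)"
    and "set (take j \<sigma> @ drop (Suc j) \<sigma>) = set \<sigma> - {\<sigma>!j}"
proof -
  have d: "distinct \<sigma>" using assms(1) by (simp add: strict_sorted_iff)
  have e: "\<sigma> = take j \<sigma> @ \<sigma>!j # drop (Suc j) \<sigma>" using assms(2) by (simp add: id_take_nth_drop)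
  have "sorted_wrt (<) (take j \<sigma> @ \<sigma>!j # drop (Suc j) \<sigma>)" using assms(1) e by simp
  then show "sorted_wrt (<) (take j \<sigma> @ drop (Suc j) \<sigma>)"
    by (auto simp: sorted_wrt_append)
  from d e have "distinct (take j \<sigma> @ \<sigma>!j # drop (Suc j) \<sigma>)" by simp
  then have "\<sigma>!j \<notin> set (take j \<sigma> @ drop (Suc j) \<sigma>)" by auto
  moreover have "set \<sigma> = insert (\<sigma>!j) (set (take j \<sigma> @ drop (Suc j) \<sigma>))"
    by (subst e) auto
  ultimately show "set (take j \<sigma> @ drop (Suc j) \<sigma>) = set \<sigma> - {\<sigma>!j}" by auto
qed

lemma nth_L: assumes "finite A" "u \<in> A" shows "L A ! pos u A = u" and "pos u A < card A"
proof -
  have s: "sorted_wrt (<) (L A)" "set (L A) = A" "length (L A) = card A" using assms(1) by auto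
  obtain i where i: "i < length (L A)" "L A ! i = u" using assms(2) s(2) by (metis in_set_conv_nth)
  have "pos u A = i" using pos_nth[OF s(1) i(1)] i(2) s(2) by simp
  then show "L A ! pos u A = u" "pos u A < card A" using i s by auto
qed

lemma pos_self: "pos u (insert u A) = pos u A" "pos u (A - {u}) = pos u A"
  unfolding pos_def by (rule arg_cong[where f=card], auto)+

lemma pos_insert: assumes "finite A" "w \<notin> A"
  shows "pos u (insert w A) = (if w < u then Suc (pos u A) else pos u A)"
proof (cases "w < u")
  case True
  then have "{a\<in>insert w A. a < u} = insert w {a\<in>A. a < u}" by auto
  then show ?thesis using True assms by (simp add: pos_def)
next
  case False
  then have "{a\<in>insert w A. a < u} = {a\<in>A. a < u}" by auto
  then show ?thesis using False by (simp add: pos_def)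
qed

definition U :: "nat set \<Rightarrow> (nat \<Rightarrow> nat \<Rightarrow> bool) \<Rightarrow> nat list \<Rightarrow> nat set" where
  "U V E \<tau> = {u \<in> V. u \<notin> set \<tau> \<and> clq V E (insert u (set \<tau>))}"

lemma bd_formula:
  fixes f :: "nat list \<Rightarrow> 'k::field"
  assumes fin: "finite V" and tau: "\<tau> \<in> clique_simplices V E d"
  shows "boundary V E d f \<tau> = (\<Sum>u\<in>U V E \<tau>. (-1)^(pos u (set \<tau>)) * f (L (insert u (set \<tau>))))"
proof -
  let ?S = "clique_simplices V E (Suc d)"
  let ?P = "{p \<in> (SIGMA \<sigma>:?S. {..<length \<sigma>}). take (snd p) (fst p) @ drop (Suc (snd p)) (fst p) = \<tau>}"
  have finS: "finite ?S" using S_finite[OF fin] .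
  have ts: "sorted_wrt (<) \<tau>" "length \<tau> = Suc d" "clq V E (set \<tau>)" using tau by (auto simp: S_iff)
  have ct: "card (set \<tau>) = Suc d" using S_finite_set[OF tau] .
  have "boundary V E d f \<tau> = (\<Sum>\<sigma>\<in>?S. \<Sum>j<length \<sigma>.
          if take j \<sigma> @ drop (Suc j) \<sigma> = \<tau> then (-1) ^ j * f \<sigma> else 0)"
    using tau by (simp add: boundary_def)
  also have "\<dots> = (\<Sum>p\<in>(SIGMA \<sigma>:?S. {..<length \<sigma>}). if take (snd p) (fst p) @ drop (Suc (snd p)) (fst p) = \<tau> then (-1) ^ (snd p) * f (fst p) else 0)"
    by (subst sum.Sigma) (use finS in \<open>auto simp: case_prod_unfold\<close>)
  also have "\<dots> = (\<Sum>p\<in>?P. (-1) ^ (snd p) * f (fst p))"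
    by (subst sum.inter_filter) (use finS in auto)
  also have "\<dots> = (\<Sum>u\<in>U V E \<tau>. (-1)^(pos u (set \<tau>)) * f (L (insert u (set \<tau>))))"
  proof (rule sym, rule sum.reindex_bij_witness[where i = "\<lambda>p. fst p ! snd p" and j = "\<lambda>u. (L (insert u (set \<tau>)), pos u (set \<tau>))"])
    fix u assume u: "u \<in> U V E \<tau>"
    then have u': "u \<in> V" "u \<notin> set \<tau>" "clq V E (insert u (set \<tau>))" by (auto simp: U_def)
    have fA: "finite (insert u (set \<tau>))" by simp
    have cA: "card (insert u (set \<tau>)) = Suc (Suc d)" using u' ct by simp
    show "fst (L (insert u (set \<tau>)), pos u (set \<tau>)) ! snd (L (insert u (set \<tau>)), pos u (set \<tau>)) = u"
    proof -
      have "pos u (insert u (set \<tau>)) = pos u (set \<tau>)" by (rule pos_self)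
      then show ?thesis using nth_L(1)[OF fA, of u] by simp
    qed
    have inS: "L (insert u (set \<tau>)) \<in> ?S" using L_in_S[OF fA cA u'(3)] .
    have pl: "pos u (set \<tau>) < length (L (insert u (set \<tau>)))"
      using nth_L(2)[OF fA, of u] pos_self(1)[of u "set \<tau>"] u'(2) by simp
    have nth: "L (insert u (set \<tau>)) ! pos u (set \<tau>) = u"
    proof -
      have "pos u (insert u (set \<tau>)) = pos u (set \<tau>)" by (rule pos_self)
      then show ?thesis using nth_L(1)[OF fA, of u] by simp
    qed
    define \<sigma> where "\<sigma> = L (insert u (set \<tau>))"
    define q where "q = pos u (set \<tau>)"
    have so: "sorted_wrt (<) \<sigma>" "set \<sigma> = insert u (set \<tau>)" using L_props[OF fA] unfolding \<sigma>_def by blast+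
    have pl': "q < length \<sigma>" and nth': "\<sigma> ! q = u" using pl nth unfolding \<sigma>_def q_def by blast+
    have "sorted_wrt (<) (take q \<sigma> @ drop (Suc q) \<sigma>)" "set (take q \<sigma> @ drop (Suc q) \<sigma>) = set \<sigma> - {\<sigma>!q}"
      using del_props[OF so(1) pl'] by blast+
    then have "sorted_wrt (<) (take q \<sigma> @ drop (Suc q) \<sigma>)" "set (take q \<sigma> @ drop (Suc q) \<sigma>) = set \<tau>"
      using nth' so(2) u'(2) by auto
    then have "take q \<sigma> @ drop (Suc q) \<sigma> = \<tau>" using L_set ts(1) by metis
    then show "(L (insert u (set \<tau>)), pos u (set \<tau>)) \<in> ?P" using inS pl unfolding \<sigma>_def q_def by simp
    show "(-1) ^ snd (L (insert u (set \<tau>)), pos u (set \<tau>)) * f (fst (L (insert u (set \<tau>)), pos u (set \<tau>)))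
       = (-1)^(pos u (set \<tau>)) * f (L (insert u (set \<tau>)))" by simp
  next
    fix p assume p: "p \<in> ?P"
    obtain \<sigma> j where pj: "p = (\<sigma>, j)" by (cases p)
    have sS: "\<sigma> \<in> ?S" and jl: "j < length \<sigma>" and de: "take j \<sigma> @ drop (Suc j) \<sigma> = \<tau>" using p pj by auto
    have so: "sorted_wrt (<) \<sigma>" using sS by (simp add: S_iff)
    have st: "set \<tau> = set \<sigma> - {\<sigma>!j}" using del_props(2)[OF so jl] de by simp
    have inn: "\<sigma>!j \<in> set \<sigma>" using jl by simp
    have ins: "insert (\<sigma>!j) (set \<tau>) = set \<sigma>" using st inn by auto
    show "fst p ! snd p \<in> U V E \<tau>"
      using sS inn st ins pj by (auto simp: U_def S_iff clq_def)
    have "pos (\<sigma>!j) (set \<tau>) = pos (\<sigma>!j) (set \<sigma>)"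
      using st pos_self(2)[of "\<sigma>!j" "set \<sigma>"] by simp
    then have "pos (\<sigma>!j) (set \<tau>) = j" using pos_nth[OF so jl] by simp
    then show "(L (insert (fst p ! snd p) (set \<tau>)), pos (fst p ! snd p) (set \<tau>)) = p"
      using ins L_set[OF so] pj by simp
  qed
  finally show ?thesis .
qed


definition cone :: "nat set \<Rightarrow> (nat \<Rightarrow> nat \<Rightarrow> bool) \<Rightarrow> nat \<Rightarrow> nat \<Rightarrow> (nat list \<Rightarrow> 'k::field) \<Rightarrow> nat list \<Rightarrow> 'k" where
  "cone V E v d f \<sigma> = (if \<sigma> \<in> clique_simplices V E (Suc d) \<and> v \<in> set \<sigma>
       then (-1)^(pos v (set \<sigma>)) * f (L (set \<sigma> - {v})) else 0)"

lemma m1sq: "((-1::'a::ring_1)^p) * (-1)^p = 1"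
  by (simp flip: power_add add: mult_2[symmetric] power_mult)

lemma sign_swap:
  assumes "finite A" "u \<noteq> v" "u \<notin> A" "v \<in> A"
  shows "((-1::'a::comm_ring_1)^pos u A) * (-1)^pos v (insert u A) = - ((-1)^pos v A * (-1)^pos u (A - {v}))"
proof -
  have A: "A = insert v (A - {v})" using assms by auto
  have p1: "pos u A = (if v < u then Suc (pos u (A - {v})) else pos u (A - {v}))"
    using pos_insert[of "A - {v}" v u] assms A by (metis Diff_iff finite_Diff singletonI)
  have p2: "pos v (insert u A) = (if u < v then Suc (pos v A) else pos v A)"
    using pos_insert[of A u v] assms by simp
  show ?thesis using assms(2) by (cases "u < v") (auto simp: p1 p2 ac_simps)
qed

lemma cone_identity:
  fixes f :: "nat list \<Rightarrow> 'k::field"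
  assumes fin: "finite V" and vV: "v \<in> V"
    and fch: "\<And>\<sigma>. \<sigma> \<notin> clique_simplices V E (Suc e) \<Longrightarrow> f \<sigma> = 0"
    and star: "\<And>\<sigma>. f \<sigma> \<noteq> 0 \<Longrightarrow> clq V E (insert v (set \<sigma>))"
  shows "boundary V E (Suc e) (cone V E v (Suc e) f) \<tau> + cone V E v e (boundary V E e f) \<tau> = f \<tau>"
proof (cases "\<tau> \<in> clique_simplices V E (Suc e)")
  case False
  then show ?thesis using fch[OF False] by (simp add: boundary_def cone_def)
next
  case tS: True
  have ts: "sorted_wrt (<) \<tau>" "clq V E (set \<tau>)" "card (set \<tau>) = Suc (Suc e)"
    using tS S_finite_set[OF tS] by (auto simp: S_iff)
  have L1: "boundary V E (Suc e) (cone V E v (Suc e) f) \<tau> =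
     (\<Sum>u\<in>U V E \<tau>. (-1)^pos u (set \<tau>) * ((-1)^pos v (insert u (set \<tau>)) * f (L (insert u (set \<tau>) - {v}))) * (if v \<in> insert u (set \<tau>) then 1 else 0))"
    unfolding bd_formula[OF fin tS]
  proof (rule sum.cong[OF refl])
    fix u assume u: "u \<in> U V E \<tau>"
    then have u': "u \<in> V" "u \<notin> set \<tau>" "clq V E (insert u (set \<tau>))" by (auto simp: U_def)
    have fA: "finite (insert u (set \<tau>))" by simp
    have cA: "card (insert u (set \<tau>)) = Suc (Suc (Suc e))" using u' ts by simp
    have inS: "L (insert u (set \<tau>)) \<in> clique_simplices V E (Suc (Suc e))" using L_in_S[OF fA cA u'(3)] .
    have st: "set (L (insert u (set \<tau>))) = insert u (set \<tau>)" using L_props[OF fA] by blast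
    show "(-1)^pos u (set \<tau>) * cone V E v (Suc e) f (L (insert u (set \<tau>))) =
       (-1)^pos u (set \<tau>) * ((-1)^pos v (insert u (set \<tau>)) * f (L (insert u (set \<tau>) - {v}))) * (if v \<in> insert u (set \<tau>) then 1 else 0)"
      unfolding cone_def using inS st by simp
  qed
  show ?thesis
  proof (cases "v \<in> set \<tau>")
    case False
    have c0: "cone V E v e (boundary V E e f) \<tau> = 0" using False by (simp add: cone_def)
    have "boundary V E (Suc e) (cone V E v (Suc e) f) \<tau> = (\<Sum>u\<in>U V E \<tau>. if u = v then f \<tau> else 0)"
      unfolding L1
    proof (rule sum.cong[OF refl])
      fix u assume u: "u \<in> U V E \<tau>"
      show "(-1)^pos u (set \<tau>) * ((-1)^pos v (insert u (set \<tau>)) * f (L (insert u (set \<tau>) - {v}))) * (if v \<in> insert u (set \<tau>) then 1 else 0) = (if u = v then f \<tau> else 0)"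
      proof (cases "u = v")
        case True
        have "insert u (set \<tau>) - {v} = set \<tau>" using True False by auto
        then show ?thesis using True L_set[OF ts(1)] pos_self(1)[of v "set \<tau>"] m1sq[of "pos v (set \<tau>)"]
          by (simp add: mult.assoc[symmetric])
      next
        case uv: False
        then have "v \<notin> insert u (set \<tau>)" using False by auto
        then show ?thesis using uv by (simp only: if_False mult_zero_right simp_thms)
      qed
    qed
    also have "\<dots> = (if v \<in> U V E \<tau> then f \<tau> else 0)"
      by (rule sum.delta) (use fin in \<open>simp add: U_def\<close>)
    also have "\<dots> = f \<tau>"
      using star[of \<tau>] vV False by (auto simp: U_def)
    finally show ?thesis using c0 by simp
  next
    case True
    define A' where "A' = set \<tau> - {v}"
    have fA': "finite A'" unfolding A'_def by simp
    have cA': "card A' = Suc e" using ts(3) True unfolding A'_def by simp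
    have qA': "clq V E A'" using clq_mono[OF ts(2)] unfolding A'_def by blast
    have t'S: "L A' \<in> clique_simplices V E e" using L_in_S[OF fA' cA' qA'] .
    have st': "set (L A') = A'" using L_props[OF fA'] by blast
    have tA: "set \<tau> = insert v A'" "v \<notin> A'" using True unfolding A'_def by auto
    have L2: "cone V E v e (boundary V E e f) \<tau> = (-1)^pos v (set \<tau>) *
         (\<Sum>u\<in>U V E (L A'). (-1)^pos u A' * f (L (insert u A')))"
      unfolding cone_def using tS True bd_formula[OF fin t'S, of f] st' by (simp add: A'_def)
    have vU: "v \<in> U V E (L A')" using vV tA ts(2) st' by (auto simp: U_def)
    have sub: "U V E \<tau> \<subseteq> U V E (L A') - {v}"
      using tA st' by (auto simp: U_def intro: clq_mono)
    have finU: "finite (U V E (L A'))" using fin by (simp add: U_def)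
    have "(\<Sum>u\<in>U V E (L A'). (-1)^pos u A' * f (L (insert u A'))) =
       (-1)^pos v A' * f (L (insert v A')) + (\<Sum>u\<in>U V E (L A') - {v}. (-1)^pos u A' * f (L (insert u A')))"
      using sum.remove[OF finU vU] by simp
    also have "(\<Sum>u\<in>U V E (L A') - {v}. (-1)^pos u A' * f (L (insert u A'))) =
        (\<Sum>u\<in>U V E \<tau>. (-1)^pos u A' * f (L (insert u A')))"
    proof (rule sum.mono_neutral_right[OF _ sub])
      show "finite (U V E (L A') - {v})" using finU by simp
      show "\<forall>u\<in>U V E (L A') - {v} - U V E \<tau>. (-1)^pos u A' * f (L (insert u A')) = 0"
      proof
        fix u assume u: "u \<in> U V E (L A') - {v} - U V E \<tau>"
        show "(-1)^pos u A' * f (L (insert u A')) = 0"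
        proof (rule ccontr)
          assume "(-1)^pos u A' * f (L (insert u A')) \<noteq> 0"
          then have "f (L (insert u A')) \<noteq> 0" by auto
          then have "clq V E (insert v (set (L (insert u A'))))" by (rule star)
          then have "clq V E (insert u (set \<tau>))" using fA' tA by (simp add: insert_commute)
          then show False using u tA st' by (auto simp: U_def)
        qed
      qed
    qed
    finally have S2: "(\<Sum>u\<in>U V E (L A'). (-1)^pos u A' * f (L (insert u A'))) =
       (-1)^pos v A' * f \<tau> + (\<Sum>u\<in>U V E \<tau>. (-1)^pos u A' * f (L (insert u A')))"
      using L_set[OF ts(1)] tA by simp
    have pv: "pos v A' = pos v (set \<tau>)" using pos_self(2)[of v "set \<tau>"] unfolding A'_def .
    have S1: "boundary V E (Suc e) (cone V E v (Suc e) f) \<tau> =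
       (\<Sum>u\<in>U V E \<tau>. - ((-1)^pos v (set \<tau>) * ((-1)^pos u A' * f (L (insert u A')))))"
      unfolding L1
    proof (rule sum.cong[OF refl])
      fix u assume u: "u \<in> U V E \<tau>"
      then have u': "u \<notin> set \<tau>" "u \<noteq> v" using True by (auto simp: U_def)
      have "insert u (set \<tau>) - {v} = insert u A'" using u' unfolding A'_def by auto
      then show "(-1)^pos u (set \<tau>) * ((-1)^pos v (insert u (set \<tau>)) * f (L (insert u (set \<tau>) - {v}))) * (if v \<in> insert u (set \<tau>) then 1 else 0)
         = - ((-1)^pos v (set \<tau>) * ((-1)^pos u A' * f (L (insert u A'))))"
        using sign_swap[of "set \<tau>" u v, where 'a='k] u' True unfolding A'_def
        by (simp add: mult.assoc[symmetric])
    qed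
    show ?thesis
      unfolding S1 L2 S2 pv
      by (simp add: ring_distribs sum_distrib_left sum_negf mult.assoc[symmetric] m1sq)
  qed
qed



lemma bd_out: "\<sigma> \<notin> clique_simplices V E d \<Longrightarrow> boundary V E d f \<sigma> = 0"
  by (simp add: boundary_def)

lemma cone_out: "\<sigma> \<notin> clique_simplices V E (Suc d) \<Longrightarrow> cone V E v d f \<sigma> = 0"
  by (simp add: cone_def)

lemma cone_zero: "cone V E v d (\<lambda>_. 0) \<sigma> = 0"
  by (simp add: cone_def)

lemma if_add0: "(if P then a + b else 0) = (if P then a else 0) + (if P then b else (0::'a::monoid_add))"
  by simp

lemma if_diff0: "(if P then a - b else 0) = (if P then a else 0) - (if P then b else (0::'a::group_add))"
  by simp

lemma bd_add: "boundary V E d (\<lambda>x. f x + g x) \<sigma> = boundary V E d f \<sigma> + boundary V E d g \<sigma>"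
proof -
  have "\<And>\<sigma>' j. (if take j \<sigma>' @ drop (Suc j) \<sigma>' = \<sigma> then (-1)^j * (f \<sigma>' + g \<sigma>') else 0) =
     (if take j \<sigma>' @ drop (Suc j) \<sigma>' = \<sigma> then (-1)^j * f \<sigma>' else 0) + (if take j \<sigma>' @ drop (Suc j) \<sigma>' = \<sigma> then (-1)^j * g \<sigma>' else 0)"
    by (simp add: distrib_left)
  then show ?thesis by (simp add: boundary_def sum.distrib)
qed

lemma bd_diff: "boundary V E d (\<lambda>x. f x - g x) \<sigma> = boundary V E d f \<sigma> - boundary V E d g \<sigma>"
proof -
  have "\<And>\<sigma>' j. (if take j \<sigma>' @ drop (Suc j) \<sigma>' = \<sigma> then (-1)^j * (f \<sigma>' - g \<sigma>') else 0) =
     (if take j \<sigma>' @ drop (Suc j) \<sigma>' = \<sigma> then (-1)^j * f \<sigma>' else 0) - (if take j \<sigma>' @ drop (Suc j) \<sigma>' = \<sigma> then (-1)^j * g \<sigma>' else 0)"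
    by (simp add: right_diff_distrib)
  then show ?thesis by (simp add: boundary_def sum_subtractf)
qed

lemma bdbd:
  fixes g :: "nat list \<Rightarrow> 'k::field"
  assumes fin: "finite V"
  shows "boundary V E d (boundary V E (Suc d) g) \<rho> = 0"
proof (cases "\<rho> \<in> clique_simplices V E d")
  case False then show ?thesis by (rule bd_out)
next
  case rS: True
  have rs: "sorted_wrt (<) \<rho>" "clq V E (set \<rho>)" "card (set \<rho>) = Suc d"
    using rS S_finite_set[OF rS] by (auto simp: S_iff)
  define h where "h = (\<lambda>(u, w). (-1)^pos u (set \<rho>) * (-1)^pos w (insert u (set \<rho>)) *
                         g (L (insert w (insert u (set \<rho>)))) :: 'k)"
  define T where "T = {(u, w). u \<in> V \<and> w \<in> V \<and> u \<notin> set \<rho> \<and> w \<notin> set \<rho> \<and> u \<noteq> w \<and>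
                         clq V E (insert w (insert u (set \<rho>)))}"
  have finT: "finite T"
    by (rule finite_subset[of _ "V \<times> V"]) (auto simp: T_def fin)
  have "boundary V E d (boundary V E (Suc d) g) \<rho> =
     (\<Sum>u\<in>U V E \<rho>. \<Sum>w\<in>U V E (L (insert u (set \<rho>))). h (u, w))"
    unfolding bd_formula[OF fin rS]
  proof (rule sum.cong[OF refl])
    fix u assume u: "u \<in> U V E \<rho>"
    then have u': "u \<in> V" "u \<notin> set \<rho>" "clq V E (insert u (set \<rho>))" by (auto simp: U_def)
    have fA: "finite (insert u (set \<rho>))" by simp
    have cA: "card (insert u (set \<rho>)) = Suc (Suc d)" using u' rs by simp
    have inS: "L (insert u (set \<rho>)) \<in> clique_simplices V E (Suc d)" using L_in_S[OF fA cA u'(3)] .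
    have st: "set (L (insert u (set \<rho>))) = insert u (set \<rho>)" using L_props[OF fA] by blast
    show "(-1)^pos u (set \<rho>) * boundary V E (Suc d) g (L (insert u (set \<rho>))) =
       (\<Sum>w\<in>U V E (L (insert u (set \<rho>))). h (u, w))"
      unfolding bd_formula[OF fin inS] st h_def by (simp add: sum_distrib_left mult.assoc)
  qed
  also have "\<dots> = (\<Sum>p\<in>(SIGMA u:U V E \<rho>. U V E (L (insert u (set \<rho>)))). h p)"
    by (subst sum.Sigma) (auto simp: fin U_def)
  also have "(SIGMA u:U V E \<rho>. U V E (L (insert u (set \<rho>)))) = T"
  proof -
    have "set (L (insert u (set \<rho>))) = insert u (set \<rho>)" for u
      using L_props[of "insert u (set \<rho>)"] by auto
    then show ?thesis by (auto simp: T_def U_def intro: clq_mono)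
  qed
  also have "(\<Sum>p\<in>T. h p) = 0"
  proof -
    define T1 where "T1 = {p\<in>T. fst p < snd p}"
    define T2 where "T2 = {p\<in>T. snd p < fst p}"
    have TT: "T = T1 \<union> T2" "T1 \<inter> T2 = {}" by (auto simp: T1_def T2_def T_def)
    have f1: "finite T1" "finite T2" using finT by (auto simp: T1_def T2_def)
    have "(\<Sum>p\<in>T2. h p) = (\<Sum>p\<in>T1. h (snd p, fst p))"
      by (rule sum.reindex_bij_witness[where i = "\<lambda>(a,b). (b,a)" and j = "\<lambda>(a,b). (b,a)"])
         (auto simp: T1_def T2_def T_def insert_commute)
    also have "\<dots> = (\<Sum>p\<in>T1. - h p)"
    proof (rule sum.cong[OF refl])
      fix p assume p: "p \<in> T1"
      obtain u w where pu: "p = (u, w)" by (cases p)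
      have uw: "u < w" "u \<notin> set \<rho>" "w \<notin> set \<rho>" using p pu by (auto simp: T1_def T_def)
      have a: "pos w (insert u (set \<rho>)) = Suc (pos w (set \<rho>))" using pos_insert[of "set \<rho>" u w] uw by simp
      have b: "pos u (insert w (set \<rho>)) = pos u (set \<rho>)" using pos_insert[of "set \<rho>" w u] uw by simp
      show "h (snd p, fst p) = - h p"
        unfolding pu h_def using a b by (simp add: insert_commute ac_simps)
    qed
    finally have "(\<Sum>p\<in>T2. h p) = - (\<Sum>p\<in>T1. h p)" by (simp add: sum_negf)
    then show ?thesis using sum.union_disjoint[OF f1 TT(2), of h] TT(1) by simp
  qed
  finally show ?thesis .
qed



lemma two_cone:
  fixes z :: "nat list \<Rightarrow> 'k::field"
  assumes fin: "finite V" and vV: "v \<in> V" and wV: "w \<in> V"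
    and hA: "\<And>\<sigma>. \<sigma> \<in> clique_simplices V E (Suc e) \<Longrightarrow> clq V E (insert v (set \<sigma>)) \<or> clq V E (insert w (set \<sigma>))"
    and hB: "\<And>\<sigma> u. \<sigma> \<in> clique_simplices V E (Suc e) \<Longrightarrow> \<not> clq V E (insert v (set \<sigma>)) \<Longrightarrow> u \<in> set \<sigma> \<Longrightarrow>
              clq V E (insert v (set \<sigma> - {u})) \<Longrightarrow> clq V E (insert w (insert v (set \<sigma> - {u})))"
    and zc: "z \<in> cycles TYPE('k) V E (Suc e)"
  shows "z \<in> bdries TYPE('k) V E (Suc e)"
proof -
  let ?S = "clique_simplices V E"
  have zch: "\<And>\<sigma>. \<sigma> \<notin> ?S (Suc e) \<Longrightarrow> z \<sigma> = 0" using zc by (auto simp: cycles_def chains_def)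
  have dz: "\<And>\<tau>. boundary V E e z \<tau> = 0" using zc by (auto simp: cycles_def fun_eq_iff)
  define z1 where "z1 = (\<lambda>\<sigma>. if clq V E (insert v (set \<sigma>)) then z \<sigma> else 0)"
  define z2 where "z2 = (\<lambda>\<sigma>. if clq V E (insert v (set \<sigma>)) then 0 else z \<sigma>)"
  have zs: "z = (\<lambda>\<sigma>. z1 \<sigma> + z2 \<sigma>)" by (auto simp: z1_def z2_def fun_eq_iff)
  have z1ch: "\<And>\<sigma>. \<sigma> \<notin> ?S (Suc e) \<Longrightarrow> z1 \<sigma> = 0" using zch by (simp add: z1_def)
  have z1st: "\<And>\<sigma>. z1 \<sigma> \<noteq> 0 \<Longrightarrow> clq V E (insert v (set \<sigma>))" by (auto simp: z1_def split: if_splits)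
  define g1 where "g1 = cone V E v (Suc e) z1"
  have ci1: "\<And>\<tau>. boundary V E (Suc e) g1 \<tau> + cone V E v e (boundary V E e z1) \<tau> = z1 \<tau>"
    unfolding g1_def by (rule cone_identity[OF fin vV z1ch z1st])
  have d12: "\<And>\<tau>. boundary V E e z1 \<tau> = - boundary V E e z2 \<tau>"
  proof -
    fix \<tau>
    have "boundary V E e z \<tau> = boundary V E e z1 \<tau> + boundary V E e z2 \<tau>"
      by (subst zs) (rule bd_add)
    then show "boundary V E e z1 \<tau> = - boundary V E e z2 \<tau>" using dz[of \<tau>] by (simp add: eq_neg_iff_add_eq_0)
  qed
  define z' where "z' = (\<lambda>\<tau>. z \<tau> - boundary V E (Suc e) g1 \<tau>)"
  have z'eq: "\<And>\<tau>. z' \<tau> = z2 \<tau> + cone V E v e (boundary V E e z1) \<tau>"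
  proof -
    fix \<tau>
    have e1: "z \<tau> = z1 \<tau> + z2 \<tau>" by (subst zs) simp
    have e2: "boundary V E (Suc e) g1 \<tau> = z1 \<tau> - cone V E v e (boundary V E e z1) \<tau>"
      using ci1[of \<tau>] by (simp add: eq_diff_eq)
    show "z' \<tau> = z2 \<tau> + cone V E v e (boundary V E e z1) \<tau>"
      unfolding z'_def e1 e2 by simp
  qed
  have z'ch: "\<And>\<sigma>. \<sigma> \<notin> ?S (Suc e) \<Longrightarrow> z' \<sigma> = 0"
    using zch bd_out unfolding z'_def by simp
  have dz': "\<And>\<tau>. boundary V E e z' \<tau> = 0"
    unfolding z'_def using bd_diff[of V E e z "boundary V E (Suc e) g1"] dz bdbd[OF fin] by simp
  have z'st: "clq V E (insert w (set \<tau>))" if nz: "z' \<tau> \<noteq> 0" for \<tau>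
  proof -
    have tS: "\<tau> \<in> ?S (Suc e)" using nz z'ch by blast
    show ?thesis
    proof (cases "z2 \<tau> = 0")
      case False
      then have "\<not> clq V E (insert v (set \<tau>))" by (auto simp: z2_def split: if_splits)
      then show ?thesis using hA[OF tS] by blast
    next
      case True
      then have cn: "cone V E v e (boundary V E e z1) \<tau> \<noteq> 0" using nz z'eq by simp
      then have vt: "v \<in> set \<tau>" and bn: "boundary V E e z1 (L (set \<tau> - {v})) \<noteq> 0"
        by (auto simp: cone_def split: if_splits)
      define A' where "A' = set \<tau> - {v}"
      have ts: "sorted_wrt (<) \<tau>" "clq V E (set \<tau>)" "card (set \<tau>) = Suc (Suc e)"
        using tS S_finite_set[OF tS] by (auto simp: S_iff)
      have fA': "finite A'" unfolding A'_def by simp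
      have cA': "card A' = Suc e" using ts(3) vt unfolding A'_def by simp
      have qA': "clq V E A'" using clq_mono[OF ts(2)] unfolding A'_def by blast
      have t'S: "L A' \<in> ?S e" using L_in_S[OF fA' cA' qA'] .
      have st': "set (L A') = A'" using L_props[OF fA'] by blast
      have tA: "set \<tau> = insert v A'" "v \<notin> A'" using vt unfolding A'_def by auto
      have "boundary V E e z2 (L A') \<noteq> 0" using bn d12[of "L A'"] unfolding A'_def by auto
      then have "(\<Sum>u\<in>U V E (L A'). (-1)^pos u A' * z2 (L (insert u A'))) \<noteq> 0"
        unfolding bd_formula[OF fin t'S] st' .
      then obtain u where u: "u \<in> U V E (L A')" "(-1)^pos u A' * z2 (L (insert u A')) \<noteq> 0"
        by (rule sum.not_neutral_contains_not_neutral)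
      have z2n: "z2 (L (insert u A')) \<noteq> 0" using u(2) by auto
      define \<sigma> where "\<sigma> = L (insert u A')"
      have uA: "u \<notin> A'" using u(1) st' by (simp add: U_def)
      have ss: "set \<sigma> = insert u A'" unfolding \<sigma>_def using fA' by simp
      have sS: "\<sigma> \<in> ?S (Suc e)" using z2n zch unfolding \<sigma>_def z2_def by (auto split: if_splits)
      have nv: "\<not> clq V E (insert v (set \<sigma>))" using z2n unfolding \<sigma>_def z2_def by (auto split: if_splits)
      have ds: "set \<sigma> - {u} = A'" using ss uA by auto
      have "clq V E (insert v A')" using ts(2) tA by simp
      moreover have "u \<in> set \<sigma>" using ss by simp
      ultimately have "clq V E (insert w (insert v (set \<sigma> - {u})))"
        using hB[OF sS nv] ds by metis
      then show ?thesis using ds tA by simp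
    qed
  qed
  define g2 where "g2 = cone V E w (Suc e) z'"
  have ci2: "\<And>\<tau>. boundary V E (Suc e) g2 \<tau> = z' \<tau>"
  proof -
    fix \<tau>
    have "boundary V E (Suc e) g2 \<tau> + cone V E w e (boundary V E e z') \<tau> = z' \<tau>"
      unfolding g2_def by (rule cone_identity[OF fin wV z'ch z'st])
    moreover have "boundary V E e z' = (\<lambda>_. 0)" using dz' by (simp add: fun_eq_iff)
    ultimately show "boundary V E (Suc e) g2 \<tau> = z' \<tau>" by (simp add: cone_zero)
  qed
  have "z = boundary V E (Suc e) (\<lambda>x. g1 x + g2 x)"
    by (rule ext) (simp add: bd_add ci2 z'_def)
  moreover have "(\<lambda>x. g1 x + g2 x) \<in> chains TYPE('k) V E (Suc (Suc e))"
    by (auto simp: chains_def g1_def g2_def cone_out)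
  ultimately show ?thesis unfolding bdries_def by blast
qed



lemma sum_fun_apply': "(\<Sum>a\<in>A. (f a :: 'b \<Rightarrow> 'c::comm_monoid_add)) x = (\<Sum>a\<in>A. f a x)"
  by (induction A rule: infinite_finite_induct) (auto simp: plus_fun_def zero_fun_def)

lemma vs_chain: "vector_space (chain_scale :: 'k::field \<Rightarrow> (nat list \<Rightarrow> 'k) \<Rightarrow> _)"
  by unfold_locales (simp_all add: chain_scale_def fun_eq_iff algebra_simps)

lemma dim_mono_chains:
  assumes fin: "finite V" and ST: "S \<subseteq> T" and Tc: "T \<subseteq> chains TYPE('k::field) V E d"
  shows "vector_space.dim (chain_scale :: 'k \<Rightarrow> _) S \<le> vector_space.dim (chain_scale :: 'k \<Rightarrow> _) T"
proof -
  interpret vs: vector_space "chain_scale :: 'k \<Rightarrow> (nat list \<Rightarrow> 'k) \<Rightarrow> _" by (rule vs_chain)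
  define \<delta> where "\<delta> = (\<lambda>(\<sigma>::nat list) (\<tau>::nat list). if \<tau> = \<sigma> then (1::'k) else 0)"
  define W where "W = \<delta> ` clique_simplices V E d"
  have finW: "finite W" unfolding W_def using S_finite[OF fin] by simp
  have chW: "chains TYPE('k) V E d \<subseteq> vs.span W"
  proof
    fix f assume f: "f \<in> chains TYPE('k) V E d"
    have "f = (\<Sum>\<sigma>\<in>clique_simplices V E d. chain_scale (f \<sigma>) (\<delta> \<sigma>))"
    proof (rule ext)
      fix \<tau>
      show "f \<tau> = (\<Sum>\<sigma>\<in>clique_simplices V E d. chain_scale (f \<sigma>) (\<delta> \<sigma>)) \<tau>"
      proof -
        have "(\<Sum>\<sigma>\<in>clique_simplices V E d. chain_scale (f \<sigma>) (\<delta> \<sigma>)) \<tau> =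
              (\<Sum>\<sigma>\<in>clique_simplices V E d. if \<tau> = \<sigma> then f \<sigma> else 0)"
          unfolding sum_fun_apply' by (rule sum.cong) (auto simp: chain_scale_def \<delta>_def)
        also have "\<dots> = f \<tau>" using f S_finite[OF fin, of E d] by (auto simp: chains_def)
        finally show ?thesis by simp
      qed
    qed
    also have "\<dots> \<in> vs.span W"
    proof (rule vs.span_sum)
      fix \<sigma> assume "\<sigma> \<in> clique_simplices V E d"
      then have "\<delta> \<sigma> \<in> vs.span W" unfolding W_def by (intro vs.span_base) simp
      then show "chain_scale (f \<sigma>) (\<delta> \<sigma>) \<in> vs.span W" by (rule vs.span_scale)
    qed
    finally show "f \<in> vs.span W" .
  qed
  obtain B where B: "B \<subseteq> T" "vs.independent B" "T \<subseteq> vs.span B" "card B = vs.dim T"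
    by (rule vs.basis_exists)
  have "finite B" using vs.independent_span_bound[OF finW B(2)] B(1) Tc chW by blast
  then have "vs.dim S \<le> card B" using vs.dim_le_card[of S B] ST B(3) by blast
  then show ?thesis using B(4) by simp
qed



lemma clq_insert: "clq V E (insert v A) \<longleftrightarrow> v \<in> V \<and> clq V E A \<and> (\<forall>a\<in>A. a \<noteq> v \<longrightarrow> E v a \<and> E a v)"
  by (auto simp: clq_def)

lemma clq_two: "clq V E (insert v B) \<Longrightarrow> clq V E (insert w B) \<Longrightarrow> E v w \<Longrightarrow> E w v \<Longrightarrow> clq V E (insert w (insert v B))"
  by (auto simp: clq_def)

lemma clq_insert_sym:
  assumes "\<And>i j. E i j = E j i" "v \<in> V" "clq V E A" "\<And>a. a \<in> A \<Longrightarrow> a \<noteq> v \<Longrightarrow> E v a"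
  shows "clq V E (insert v A)"
proof -
  have "\<forall>a\<in>A. a \<noteq> v \<longrightarrow> E v a \<and> E a v" using assms(1,4) by metis
  then show ?thesis by (simp add: clq_insert assms(2,3))
qed

theorem theorem3:
  fixes x :: "nat \<Rightarrow> real" and n l :: nat and M :: "nat \<Rightarrow> nat \<Rightarrow> real"
  assumes "n \<ge> 2" and "1 \<le> l" and "l \<le> n - 1"
    and "\<And>i j. 1 \<le> i \<Longrightarrow> i \<le> j \<Longrightarrow> j \<le> n \<Longrightarrow> x i \<le> x j"
    and "x l < 0" and "0 \<le> x (Suc l)"
    and "M = (\<lambda>i j. - (x i * x j))"
    and "\<And>a b c d. 1 \<le> a \<Longrightarrow> a < b \<Longrightarrow> b \<le> n \<Longrightarrow> 1 \<le> c \<Longrightarrow> c < d \<Longrightarrow> d \<le> n \<Longrightarrow>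
           (a, b) \<noteq> (c, d) \<Longrightarrow> M a b \<noteq> M c d"
  shows "\<forall>k t. k > 0 \<longrightarrow> t \<in> {0..1} \<longrightarrow> betti_curve TYPE('k::field) M n k t = 0"
proof (intro allI impI)
  fix k :: nat and t :: real
  assume k: "k > 0" and t: "t \<in> {0..1}"
  obtain e where ke: "k = Suc e" using k by (cases k) auto
  define V where "V = {1..n}"
  define E where "E = graph_edge M n t"
  have fin: "finite V" unfolding V_def by simp
  have Mxx: "\<And>i j. M i j = - (x i * x j)" using assms(7) by simp
  have Msym: "\<And>i j. M i j = M j i" unfolding Mxx by (simp add: mult.commute)
  have Esym: "\<And>i j. E i j = E j i" unfolding E_def graph_edge_def by (auto simp: min.commute max.commute)
  have Mmm: "\<And>a b. M (min a b) (max a b) = M a b" using Msym by (metis max_def min_def)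
  have Emono: "E a b" if "E i j" "a \<in> V" "b \<in> V" "a \<noteq> b" "M a b \<le> M i j" for i j a b
  proof -
    have ij: "i \<in> {1..n}" "j \<in> {1..n}" "i \<noteq> j" "real (ordering_rank M n (min i j) (max i j)) \<le> t * real (n choose 2)"
      using that(1) unfolding E_def graph_edge_def by auto
    have "{(p, q). 1 \<le> p \<and> p < q \<and> q \<le> n \<and> M p q \<le> M (min a b) (max a b)} \<subseteq>
          {(p, q). 1 \<le> p \<and> p < q \<and> q \<le> n \<and> M p q \<le> M (min i j) (max i j)}"
      using that(5) Mmm by auto
    moreover have "finite {(p, q). 1 \<le> p \<and> p < q \<and> q \<le> n \<and> M p q \<le> M (min i j) (max i j)}"
      by (rule finite_subset[of _ "{1..n} \<times> {1..n}"]) auto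
    ultimately have "ordering_rank M n (min a b) (max a b) \<le> ordering_rank M n (min i j) (max i j)"
      unfolding ordering_rank_def by (rule card_mono[rotated])
    then have "real (ordering_rank M n (min a b) (max a b)) \<le> t * real (n choose 2)"
      using ij(4) by (meson of_nat_le_iff order_trans)
    then show ?thesis using that(2-4) unfolding E_def graph_edge_def V_def by blast
  qed
  have lV: "l \<in> V" "Suc l \<in> V" "1 \<in> V" "n \<in> V" using assms(1-3) unfolding V_def by auto
  have xneg: "x i < 0" if "i \<in> V" "i \<le> l" for i
  proof -
    have "x i \<le> x l" using assms(4)[of i l] assms(1,3) that unfolding V_def by auto
    then show ?thesis using assms(5) by simp
  qed
  have xpos: "\<And>j. j \<in> V \<Longrightarrow> l < j \<Longrightarrow> 0 \<le> x j"
  proof -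
    fix j assume "j \<in> V" "l < j"
    then have "x (Suc l) \<le> x j" using assms(4)[of "Suc l" j] unfolding V_def by auto
    then show "0 \<le> x j" using assms(6) by simp
  qed
  have xmono: "\<And>i j. i \<in> V \<Longrightarrow> j \<in> V \<Longrightarrow> i \<le> j \<Longrightarrow> x i \<le> x j"
    using assms(4) unfolding V_def by auto
  have Vcl: "\<And>\<sigma> e. \<sigma> \<in> clique_simplices V E e \<Longrightarrow> set \<sigma> \<subseteq> V \<and> (\<forall>a\<in>set \<sigma>. \<forall>b\<in>set \<sigma>. a \<noteq> b \<longrightarrow> E a b)"
    by (auto simp: S_iff clq_def)
  have two: "\<exists>b\<in>set \<sigma>. b \<noteq> a" if "\<sigma> \<in> clique_simplices V E (Suc e)" for \<sigma> a
  proof -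
    have "card (set \<sigma>) = Suc (Suc e)" using S_finite_set[OF that] .
    moreover have "card (set \<sigma>) \<le> 1" if "set \<sigma> \<subseteq> {a}"
      using card_mono[of "{a}" "set \<sigma>"] that by simp
    ultimately have "\<not> set \<sigma> \<subseteq> {a}" by auto
    then show ?thesis by auto
  qed
  have cyc_sub: "cycles TYPE('k) V E (Suc e) \<subseteq> bdries TYPE('k) V E (Suc e)"
  proof (cases "E l (Suc l)")
    case True
    have same: "E a b" if "a \<in> V" "b \<in> V" "a \<noteq> b" "a \<le> l \<longleftrightarrow> b \<le> l" for a b
    proof (rule Emono[OF True that(1-3)])
      have "0 \<le> x a * x b"
      proof (cases "a \<le> l")
        case True
        then have "x a < 0" "x b < 0" using that xneg by auto
        then show ?thesis by (simp add: zero_le_mult_iff)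
      next
        case False
        then have "0 \<le> x a" "0 \<le> x b" using that xpos by auto
        then show ?thesis by simp
      qed
      moreover have "x l * x (Suc l) \<le> 0" using assms(5,6) by (simp add: mult_nonpos_nonneg)
      ultimately show "M a b \<le> M l (Suc l)" unfolding Mxx by simp
    qed
    have mix: "E l j" if "i \<in> V" "i \<le> l" "j \<in> V" "l < j" "E i j" for i j
    proof (cases "i = l")
      case True then show ?thesis using that by simp
    next
      case False
      show ?thesis
      proof (rule Emono[OF that(5) lV(1) that(3)])
        show "l \<noteq> j" using that by simp
        have "x i * x j \<le> x l * x j"
          by (rule mult_right_mono) (use that xmono xpos lV in auto)
        then show "M l j \<le> M i j" unfolding Mxx by simp
      qed
    qed
    show ?thesis
    proof
      fix z assume "z \<in> cycles TYPE('k) V E (Suc e)"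
      show "z \<in> bdries TYPE('k) V E (Suc e)"
      proof (rule two_cone[OF fin lV(1) lV(2) _ _ \<open>z \<in> _\<close>])
        fix \<sigma> assume sS: "\<sigma> \<in> clique_simplices V E (Suc e)"
        have sv: "set \<sigma> \<subseteq> V" "\<And>a b. a \<in> set \<sigma> \<Longrightarrow> b \<in> set \<sigma> \<Longrightarrow> a \<noteq> b \<Longrightarrow> E a b"
          using Vcl[OF sS] by auto
        have cs: "clq V E (set \<sigma>)" using sS by (simp add: S_iff)
        show hA: "clq V E (insert l (set \<sigma>)) \<or> clq V E (insert (Suc l) (set \<sigma>))"
        proof (cases "\<exists>i\<in>set \<sigma>. i \<le> l")
          case True
          then obtain i where i: "i \<in> set \<sigma>" "i \<le> l" by blast
          have "E l a" if "a \<in> set \<sigma>" "a \<noteq> l" for a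
          proof (cases "a \<le> l")
            case True then show ?thesis using same[of l a] that sv lV by auto
          next
            case False
            then have "E i a" using sv(2)[OF i(1) that(1)] i by auto
            then show ?thesis using mix[of i a] i sv False that by auto
          qed
          then have "clq V E (insert l (set \<sigma>))" by (intro clq_insert_sym[OF Esym _ cs]) (use lV in auto)
          then show ?thesis by blast
        next
          case False
          have "E (Suc l) a" if "a \<in> set \<sigma>" "a \<noteq> Suc l" for a
            using same[of "Suc l" a] that sv lV False by auto
          then have "clq V E (insert (Suc l) (set \<sigma>))" by (intro clq_insert_sym[OF Esym _ cs]) (use lV in auto)
          then show ?thesis by blast
        qed
        fix u assume "\<not> clq V E (insert l (set \<sigma>))" "u \<in> set \<sigma>" "clq V E (insert l (set \<sigma> - {u}))"
        then have "clq V E (insert (Suc l) (set \<sigma>))" using hA by blast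
        then have "clq V E (insert (Suc l) (set \<sigma> - {u}))" by (rule clq_mono) blast
        then show "clq V E (insert (Suc l) (insert l (set \<sigma> - {u})))"
          using clq_two[OF \<open>clq V E (insert l (set \<sigma> - {u}))\<close>] True Esym[of l "Suc l"] by blast
      qed
    qed
  next
    case False
    have nomix: "\<not> E i j" if "i \<in> V" "i \<le> l" "j \<in> V" "l < j" for i j
    proof
      assume Eij: "E i j"
      have "x i * x j \<le> x l * x j"
        by (rule mult_right_mono) (use that xmono xpos lV in auto)
      also have "x l * x j \<le> x l * x (Suc l)"
        by (rule mult_left_mono_neg) (use that xmono lV assms(5) in auto)
      finally have "M l (Suc l) \<le> M i j" unfolding Mxx by simp
      then have "E l (Suc l)" using Emono[OF Eij lV(1) lV(2)] by simp
      then show False using False by simp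
    qed
    have negc: "E 1 a" if "a \<in> V" "b \<in> V" "a \<le> l" "b \<le> l" "E a b" "a \<noteq> 1" for a b
    proof (rule Emono[OF that(5) lV(3) that(1)])
      show "1 \<noteq> a" using that by simp
      have xa: "x a \<le> 0" using xneg[OF that(1,3)] by simp
      have "x 1 \<le> x b" using xmono[OF lV(3) that(2)] that(2) by (simp add: V_def)
      then have "x a * x b \<le> x a * x 1" by (rule mult_left_mono_neg[OF _ xa])
      then show "M 1 a \<le> M a b" unfolding Mxx by (simp add: mult.commute)
    qed
    have posc: "E n a" if "a \<in> V" "b \<in> V" "l < a" "l < b" "E a b" "a \<noteq> n" for a b
    proof (rule Emono[OF that(5) lV(4) that(1)])
      show "n \<noteq> a" using that by simp
      have "x a * x b \<le> x a * x n"
        by (rule mult_left_mono) (use that xmono xpos lV in \<open>auto simp: V_def\<close>)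
      then show "M n a \<le> M a b" unfolding Mxx by (simp add: mult.commute)
    qed
    have sides: "(\<forall>a\<in>set \<sigma>. a \<le> l) \<or> (\<forall>a\<in>set \<sigma>. l < a)" if sS: "\<sigma> \<in> clique_simplices V E (Suc e)" for \<sigma>
    proof (rule ccontr)
      assume "\<not> ?thesis"
      then obtain a b where "a \<in> set \<sigma>" "b \<in> set \<sigma>" "a \<le> l" "l < b" by (auto simp: not_less)
      then show False using Vcl[OF sS] nomix[of a b] by auto
    qed
    show ?thesis
    proof
      fix z assume "z \<in> cycles TYPE('k) V E (Suc e)"
      show "z \<in> bdries TYPE('k) V E (Suc e)"
      proof (rule two_cone[OF fin lV(3) lV(4) _ _ \<open>z \<in> _\<close>])
        fix \<sigma> assume sS: "\<sigma> \<in> clique_simplices V E (Suc e)"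
        have sv: "set \<sigma> \<subseteq> V" "\<And>a b. a \<in> set \<sigma> \<Longrightarrow> b \<in> set \<sigma> \<Longrightarrow> a \<noteq> b \<Longrightarrow> E a b"
          using Vcl[OF sS] by auto
        have cs: "clq V E (set \<sigma>)" using sS by (simp add: S_iff)
        have negcase: "clq V E (insert 1 (set \<sigma>))" if allneg: "\<forall>a\<in>set \<sigma>. a \<le> l"
        proof -
          have "E 1 a" if "a \<in> set \<sigma>" "a \<noteq> 1" for a
          proof -
            obtain b where "b \<in> set \<sigma>" "b \<noteq> a" using two[OF sS, of a] by blast
            then show ?thesis using negc[of a b] sv allneg that by auto
          qed
          then show ?thesis by (intro clq_insert_sym[OF Esym _ cs]) (use lV in auto)
        qed
        show "clq V E (insert 1 (set \<sigma>)) \<or> clq V E (insert n (set \<sigma>))"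
        proof (cases "\<forall>a\<in>set \<sigma>. a \<le> l")
          case True then show ?thesis using negcase by blast
        next
          case False
          then have allpos: "\<forall>a\<in>set \<sigma>. l < a" using sides[OF sS] by blast
          have "E n a" if "a \<in> set \<sigma>" "a \<noteq> n" for a
          proof -
            obtain b where "b \<in> set \<sigma>" "b \<noteq> a" using two[OF sS, of a] by blast
            then show ?thesis using posc[of a b] sv allpos that by auto
          qed
          then have "clq V E (insert n (set \<sigma>))" by (intro clq_insert_sym[OF Esym _ cs]) (use lV in auto)
          then show ?thesis by blast
        qed
        fix u assume nc: "\<not> clq V E (insert 1 (set \<sigma>))" "u \<in> set \<sigma>" "clq V E (insert 1 (set \<sigma> - {u}))"
        have allpos: "\<forall>a\<in>set \<sigma>. l < a" using sides[OF sS] negcase nc(1) by blast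
        obtain b where b: "b \<in> set \<sigma>" "b \<noteq> u" using two[OF sS, of u] by blast
        have "l < b" using allpos b by blast
        then have "E 1 b" using nc(3) b assms(2) by (auto simp: clq_def)
        then show "clq V E (insert n (insert 1 (set \<sigma> - {u})))"
          using nomix[of 1 b] lV \<open>l < b\<close> sv b assms(2) by auto
      qed
    qed
  qed
  have bc: "bdries TYPE('k) V E (Suc e) \<subseteq> chains TYPE('k) V E (Suc e)"
    by (auto simp: bdries_def chains_def bd_out)
  show "betti_curve TYPE('k) M n k t = 0"
    unfolding betti_curve_def simplicial_betti_def ke V_def[symmetric] E_def[symmetric]
    using dim_mono_chains[OF fin cyc_sub bc] by simp
qed

end
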